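(* Let $W$ be a smooth function supported in $[1,2]$, let $Q\ge 2$, let $1\le X\le Q^2$, and let $C\ge1$. Let $(a_n)_{n\le X}$, $(b_n)_{n\le X}$ be complex numbers (set $a_n=b_n=0$ for $n>X$) such that for every $\epsilon>0$ and every $K>0$, $$\sum_{\substack{m\le u\\(m,c)=1}}a_{m\ell}\psi(m)\ll_{\epsilon,K}\ell^{-1/2}Q^\epsilon,\qquad \sum_{\substack{n\le v\\(n,c)=1}}b_{n\ell}\psi(n)\ll_{\epsilon,K}\ell^{-1/2}Q^\epsilon,$$ uniformly for positive integers $c,\ell\le KX$, reals $u,v\le KX$, and Dirichlet characters $\psi$ of conductor at most $KQ$. For positive integers $m\ne n$ define $$U(m,n)=\sum_{\substack{a,c,d\ge1,\ (acd,mn)=1\\ ad\mid m-n,\ c>C}}\frac{W(a^2cd/Q)\mu(a)\mu(ac)}{a\,\phi(ac)}.$$ Then for every $\epsilon>0$, $$U_E:=\sum_{\substack{m,n\le X\\ m\ne n}}a_mb_nU(m,n)\ll_\epsilon \frac{Q}{C}Q^{\epsilon},$$ with the implied constant independent of $C$.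
   Context: $\mu$ is the Möbius function and $\phi$ is Euler's function. *)

theory Defs
  imports "HOL-Analysis.Analysis" "HOL-Number_Theory.Number_Theory" "HOL-Computational_Algebra.Squarefree"
begin

definition moebius_mu :: "nat \<Rightarrow> int" where
  "moebius_mu n = (if n = 0 \<or> \<not> squarefree n then 0 else (-1) ^ card (prime_factors n))"

definition smooth_fun :: "(real \<Rightarrow> real) \<Rightarrow> bool" where
  "smooth_fun W \<longleftrightarrow> (\<forall>k x. ((deriv ^^ k) W) differentiable (at x))"

definition dirichlet_char :: "nat \<Rightarrow> (nat \<Rightarrow> complex) \<Rightarrow> bool" where
  "dirichlet_char q \<theta> \<longleftrightarrow> q \<ge> 1 \<and>
     (\<forall>m n. \<theta> (m * n) = \<theta> m * \<theta> n) \<and>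
     (\<forall>n. \<theta> (n + q) = \<theta> n) \<and>
     (\<forall>n. \<theta> n = 0 \<longleftrightarrow> \<not> coprime n q)"

definition induced_mod :: "nat \<Rightarrow> nat \<Rightarrow> (nat \<Rightarrow> complex) \<Rightarrow> bool" where
  "induced_mod q d \<theta> \<longleftrightarrow> d dvd q \<and>
     (\<exists>\<theta>'. dirichlet_char d \<theta>' \<and> (\<forall>n. coprime n q \<longrightarrow> \<theta> n = \<theta>' n))"

definition conductor :: "nat \<Rightarrow> (nat \<Rightarrow> complex) \<Rightarrow> nat" where
  "conductor q \<theta> = (LEAST d. d \<ge> 1 \<and> induced_mod q d \<theta>)"

definition U_fun :: "(real \<Rightarrow> real) \<Rightarrow> real \<Rightarrow> real \<Rightarrow> nat \<Rightarrow> nat \<Rightarrow> real" where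
  "U_fun W Q C m n =
     infsum (\<lambda>(a, c, d). W (real (a^2 * c * d) / Q) * real_of_int (moebius_mu a) * real_of_int (moebius_mu (a * c))
                        / (real a * real (totient (a * c))))
       {(a, c, d). a \<ge> 1 \<and> c \<ge> 1 \<and> d \<ge> 1 \<and> coprime (a * c * d) (m * n)
                  \<and> int (a * d) dvd (int m - int n) \<and> real c > C}"

end

theory Submission
  imports Defs "HOL-Algebra.Multiplicative_Group"
begin

definition char_on :: "('a, 'b) monoid_scheme \<Rightarrow> 'a set \<Rightarrow> ('a \<Rightarrow> complex) \<Rightarrow> bool" where
  "char_on G H f \<longleftrightarrow> (\<forall>x\<in>H. \<forall>y\<in>H. f (x \<otimes>\<^bsub>G\<^esub> y) = f x * f y) \<and> (\<forall>x\<in>H. f x \<noteq> 0)"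

context comm_group
begin

lemma sub_pow:
  assumes "subgroup H G" "x \<in> H" shows "x [^] (n::nat) \<in> H"
proof (induction n)
  case 0 then show ?case using assms(1) by (simp add: subgroup.one_closed)
next
  case (Suc n) then show ?case using assms by (simp add: nat_pow_Suc subgroup.m_closed)
qed

lemma char_on_one:
  assumes "subgroup H G" "char_on G H f" shows "f \<one> = 1"
proof -
  have "\<one> \<in> H" using assms(1) by (simp add: subgroup.one_closed)
  then have "f \<one> = f \<one> * f \<one>" "f \<one> \<noteq> 0" using assms(2) unfolding char_on_def
    by (metis l_one subgroup.mem_carrier[OF assms(1)])+
  then show ?thesis by simp
qed

lemma char_on_pow:
  assumes "subgroup H G" "char_on G H f" "x \<in> H" shows "f (x [^] (n::nat)) = f x ^ n"
proof (induction n)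
  case 0 then show ?case using char_on_one[OF assms(1,2)] by simp
next
  case (Suc n)
  have "x [^] n \<in> H" using assms by (simp add: sub_pow)
  then show ?case using Suc assms(2,3) unfolding char_on_def by (simp add: nat_pow_Suc)
qed

lemma ext_step:
  assumes fin: "finite (carrier G)" and H: "subgroup H G" and f: "char_on G H f"
    and g: "g \<in> carrier G" "g \<notin> H"
    and k: "k = (LEAST k. 0 < k \<and> g [^] k \<in> H)"
    and z: "z ^ k = f (g [^] k)"
  shows "subgroup {h \<otimes> g [^] (i::nat) | h i. h \<in> H} G"
    and "\<exists>F. char_on G {h \<otimes> g [^] (i::nat) | h i. h \<in> H} F \<and> (\<forall>h\<in>H. F h = f h) \<and> F g = z"
proof -
  define H' where "H' = {h \<otimes> g [^] (i::nat) | h i. h \<in> H}"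
  have HG: "\<And>h. h \<in> H \<Longrightarrow> h \<in> carrier G" by (rule subgroup.mem_carrier[OF H])
  have ordpos: "0 < order G" unfolding order_def using fin one_closed card_gt_0_iff by blast
  have "g [^] order G = \<one>" by (rule pow_order_eq_1[OF g(1)])
  then have ex: "0 < order G \<and> g [^] order G \<in> H" using ordpos H subgroup.one_closed by auto
  have kpos: "0 < k" and gk: "g [^] k \<in> H" using LeastI[of "\<lambda>k. 0 < k \<and> g [^] k \<in> H", OF ex] k by auto
  have kmin: "g [^] j \<notin> H" if "0 < j" "j < k" for j
    using k not_less_Least[of j "\<lambda>k. 0 < k \<and> g [^] k \<in> H"] that by auto
  have uniq: "s = t \<and> h1 = h2" if "h1 \<in> H" "h2 \<in> H" "s < k" "t < k"
      "h1 \<otimes> g [^] s = h2 \<otimes> g [^] t" for h1 h2 s t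
  proof -
    have main: "s = t \<and> h1 = h2" if "h1 \<in> H" "h2 \<in> H" "s \<le> t" "t < k"
      "h1 \<otimes> g [^] s = h2 \<otimes> g [^] t" for h1 h2 s t
    proof -
      have "g [^] t = g [^] (t - s) \<otimes> g [^] s" using that(3) g(1)
        by (simp add: nat_pow_mult)
      then have "h1 \<otimes> g [^] s = (h2 \<otimes> g [^] (t - s)) \<otimes> g [^] s"
        using that HG g(1) by (simp add: m_assoc)
      then have e: "h1 = h2 \<otimes> g [^] (t - s)" using that HG g(1)
        by simp
      then have "g [^] (t - s) = inv h2 \<otimes> h1" using that HG g(1)
        by (simp add: inv_solve_left)
      also have "\<dots> \<in> H" using that H by (simp add: subgroup.m_closed subgroup.m_inv_closed)
      finally have "t - s = 0" using kmin[of "t - s"] that by linarith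
      then have "s = t" using that by simp
      then show ?thesis using e g(1) HG that by simp
    qed
    show ?thesis
    proof (cases "s \<le> t")
      case True then show ?thesis using main that by blast
    next
      case False then show ?thesis using main[of h2 h1 t s] that by auto
    qed
  qed
  define rep where "rep y = (SOME p. fst p \<in> H \<and> snd p < k \<and> y = fst p \<otimes> g [^] snd p)" for y
  define F where "F y = f (fst (rep y)) * z ^ snd (rep y)" for y
  have fpow: "\<And>x n. x \<in> H \<Longrightarrow> f (x [^] (n::nat)) = f x ^ n" using char_on_pow[OF H f] by blast
  have fmul: "\<And>x y. x \<in> H \<Longrightarrow> y \<in> H \<Longrightarrow> f (x \<otimes> y) = f x * f y" using f unfolding char_on_def by blast
  have key: "F (h \<otimes> g [^] i) = f h * z ^ i" if hH: "h \<in> H" for h i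
  proof -
    define q where "q = i div k"
    define s where "s = i mod k"
    have i: "i = k * q + s" unfolding q_def s_def by simp
    have sk: "s < k" unfolding s_def using kpos by simp
    define h' where "h' = h \<otimes> (g [^] k) [^] q"
    have h'H: "h' \<in> H" unfolding h'_def using hH gk H
      by (simp add: subgroup.m_closed sub_pow)
    have eq: "h \<otimes> g [^] i = h' \<otimes> g [^] s" unfolding h'_def i using hH HG g(1)
      by (simp add: nat_pow_mult nat_pow_pow m_assoc)
    have ex2: "\<exists>p. fst p \<in> H \<and> snd p < k \<and> h \<otimes> g [^] i = fst p \<otimes> g [^] snd p"
      using h'H sk eq by (intro exI[of _ "(h', s)"]) auto
    have r: "fst (rep (h \<otimes> g [^] i)) \<in> H \<and> snd (rep (h \<otimes> g [^] i)) < k \<and>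
       h \<otimes> g [^] i = fst (rep (h \<otimes> g [^] i)) \<otimes> g [^] snd (rep (h \<otimes> g [^] i))"
      unfolding rep_def by (rule someI_ex[OF ex2])
    then have "fst (rep (h \<otimes> g [^] i)) = h' \<and> snd (rep (h \<otimes> g [^] i)) = s"
      using uniq[of "fst (rep (h \<otimes> g [^] i))" h' "snd (rep (h \<otimes> g [^] i))" s] h'H sk eq by metis
    then have "F (h \<otimes> g [^] i) = f h' * z ^ s" unfolding F_def by simp
    also have "f h' = f h * f (g [^] k) ^ q" unfolding h'_def
      using hH gk H by (simp add: fmul fpow sub_pow)
    also have "f h * f (g [^] k) ^ q * z ^ s = f h * z ^ i"
      unfolding i z[symmetric] by (simp add: power_add power_mult)
    finally show ?thesis .
  qed
  have H'G: "H' \<subseteq> carrier G" unfolding H'_def using HG g(1) by (auto intro!: m_closed nat_pow_closed)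
  have mulc: "x \<otimes> y \<in> H' \<and> F (x \<otimes> y) = F x * F y" if xH: "x \<in> H'" and yH: "y \<in> H'" for x y
  proof -
    obtain h1 and i :: nat where x: "h1 \<in> H" "x = h1 \<otimes> g [^] i" using xH unfolding H'_def by blast
    obtain h2 and j :: nat where y: "h2 \<in> H" "y = h2 \<otimes> g [^] j" using yH unfolding H'_def by blast
    have "x \<otimes> y = (h1 \<otimes> h2) \<otimes> g [^] (i + j)" unfolding x y using x y HG g(1)
      by (simp add: nat_pow_mult m_ac)
    moreover have "h1 \<otimes> h2 \<in> H" using x y H by (simp add: subgroup.m_closed)
    ultimately show ?thesis using key x y unfolding H'_def
      by (auto simp: fmul power_add)
  qed
  have fnz: "\<And>h. h \<in> H \<Longrightarrow> f h \<noteq> 0" using f unfolding char_on_def by blast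
  have znz: "z \<noteq> 0" using z fnz[OF gk] kpos by (metis power_0_left less_not_refl)
  show sg: "subgroup H' G"
  proof (rule subgroupI)
    show "H' \<subseteq> carrier G" by (rule H'G)
    show "H' \<noteq> {}" unfolding H'_def using H subgroup.one_closed by blast
    show "a \<otimes> b \<in> H'" if "a \<in> H'" "b \<in> H'" for a b using mulc that by blast
    show "inv a \<in> H'" if "a \<in> H'" for a
    proof -
      obtain h and i :: nat where a: "h \<in> H" "a = h \<otimes> g [^] i" using \<open>a \<in> H'\<close> unfolding H'_def by blast
      have "g [^] ((order G - 1) * i) \<otimes> g [^] i = \<one>"
      proof -
        have "g [^] ((order G - 1) * i) \<otimes> g [^] i = g [^] (order G * i)"
          using ordpos g(1) by (simp add: nat_pow_mult algebra_simps)
        also have "\<dots> = \<one>" using pow_order_eq_1[OF g(1)] g(1) by (simp add: nat_pow_pow[symmetric])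
        finally show ?thesis .
      qed
      then have gi: "inv (g [^] i) = g [^] ((order G - 1) * i)" using g(1) by (simp add: inv_equality)
      have "inv a = inv h \<otimes> g [^] ((order G - 1) * i)" unfolding a gi[symmetric]
        using a HG g(1) by (simp add: inv_mult m_comm)
      then show ?thesis unfolding H'_def using a H by (auto simp: subgroup.m_inv_closed)
    qed
  qed
  show "\<exists>F. char_on G {h \<otimes> g [^] (i::nat) | h i. h \<in> H} F \<and> (\<forall>h\<in>H. F h = f h) \<and> F g = z"
  proof (intro exI conjI)
    show "char_on G {h \<otimes> g [^] (i::nat) | h i. h \<in> H} F"
      unfolding char_on_def H'_def[symmetric]
    proof (intro conjI ballI)
      show "F (x \<otimes> y) = F x * F y" if "x \<in> H'" "y \<in> H'" for x y using mulc that by blast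
      show "F x \<noteq> 0" if "x \<in> H'" for x
        using that key fnz znz unfolding H'_def by auto
    qed
    show "\<forall>h\<in>H. F h = f h"
    proof
      fix h assume "h \<in> H"
      then show "F h = f h" using key[of h 0] HG by simp
    qed
    have "F (\<one> \<otimes> g [^] (1::nat)) = f \<one> * z" using key[of \<one> 1] H subgroup.one_closed by fastforce
    then show "F g = z" using g(1) char_on_one[OF H f] by simp
  qed
qed


lemma least_props:
  assumes fin: "finite (carrier G)" and H: "subgroup H G" and g: "g \<in> carrier G"
  shows "0 < (LEAST k::nat. 0 < k \<and> g [^] k \<in> H) \<and> g [^] (LEAST k::nat. 0 < k \<and> g [^] k \<in> H) \<in> H"
proof -
  have ordpos: "0 < order G" unfolding order_def using fin one_closed card_gt_0_iff by blast
  have "g [^] order G = \<one>" by (rule pow_order_eq_1[OF g])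
  then have ex: "0 < order G \<and> g [^] order G \<in> H" using ordpos H subgroup.one_closed by auto
  show ?thesis by (rule LeastI[of "\<lambda>k. 0 < k \<and> g [^] k \<in> H", OF ex])
qed

lemma ext_char:
  assumes fin: "finite (carrier G)"
  shows "subgroup H G \<Longrightarrow> char_on G H f \<Longrightarrow> \<exists>F. char_on G (carrier G) F \<and> (\<forall>h\<in>H. F h = f h)"
proof (induction "card (carrier G - H)" arbitrary: H f rule: less_induct)
  case less
  show ?case
  proof (cases "H = carrier G")
    case True then show ?thesis using less.prems by auto
  next
    case False
    then obtain g where g: "g \<in> carrier G" "g \<notin> H" using subgroup.subset[OF less.prems(1)] by blast
    define k where "k = (LEAST k::nat. 0 < k \<and> g [^] k \<in> H)"
    have kp: "0 < k" "g [^] k \<in> H" using least_props[OF fin less.prems(1) g(1)] unfolding k_def by auto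
    define w where "w = f (g [^] k)"
    have wnz: "w \<noteq> 0" using less.prems(2) kp unfolding w_def char_on_def by blast
    define z where "z = exp (ln w / of_nat k)"
    have z: "z ^ k = f (g [^] k)"
    proof -
      have e: "of_nat k * (ln w / of_nat k) = ln w" using kp by simp
      have "z ^ k = exp (of_nat k * (ln w / of_nat k))" unfolding z_def by (rule exp_of_nat_mult[symmetric])
      also have "\<dots> = w" unfolding e using wnz by simp
      finally show ?thesis unfolding w_def .
    qed
    define H1 where "H1 = {h \<otimes> g [^] (i::nat) | h i. h \<in> H}"
    have sH1: "subgroup H1 G" unfolding H1_def
      by (rule ext_step(1)[OF fin less.prems g k_def z])
    obtain F1 where F1: "char_on G H1 F1" "\<forall>h\<in>H. F1 h = f h"
      using ext_step(2)[OF fin less.prems g k_def z] unfolding H1_def by blast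
    have HH1: "H \<subseteq> H1"
    proof
      fix h assume "h \<in> H"
      then have "h = h \<otimes> g [^] (0::nat)" using subgroup.mem_carrier[OF less.prems(1)] by simp
      then show "h \<in> H1" unfolding H1_def using \<open>h \<in> H\<close> by blast
    qed
    have gH1: "g \<in> H1"
    proof -
      have "g = \<one> \<otimes> g [^] (1::nat)" using g by simp
      then show ?thesis unfolding H1_def using subgroup.one_closed[OF less.prems(1)] by blast
    qed
    have "carrier G - H1 \<subset> carrier G - H" using HH1 gH1 g by blast
    then have "card (carrier G - H1) < card (carrier G - H)"
      using fin by (meson finite_Diff psubset_card_mono)
    then obtain F where F: "char_on G (carrier G) F" "\<forall>h\<in>H1. F h = F1 h"
      using less.hyps[OF _ sH1 F1(1)] by blast
    show ?thesis using F F1 HH1 by (intro exI[of _ F]) auto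
  qed
qed

lemma sep_char:
  assumes fin: "finite (carrier G)" and x: "x \<in> carrier G" "x \<noteq> \<one>"
  shows "\<exists>F. char_on G (carrier G) F \<and> F x \<noteq> 1"
proof -
  have H: "subgroup {\<one>} G" by (rule triv_subgroup)
  have f: "char_on G {\<one>} (\<lambda>_. 1)" unfolding char_on_def by simp
  define k where "k = (LEAST k::nat. 0 < k \<and> x [^] k \<in> {\<one>})"
  have kp: "0 < k" "x [^] k \<in> {\<one>}" using least_props[OF fin H x(1)] unfolding k_def by auto
  have "k \<noteq> 1" using kp x by auto
  then have k2: "k \<ge> 2" using kp by linarith
  define z where "z = exp (2 * of_real pi * \<i> / of_nat k)"
  have z: "z ^ k = (\<lambda>_. 1) (x [^] k)"
  proof -
    have e: "of_nat k * (2 * of_real pi * \<i> / of_nat k) = 2 * of_real pi * \<i>" using kp by simp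
    have "z ^ k = exp (of_nat k * (2 * of_real pi * \<i> / of_nat k))" unfolding z_def by (rule exp_of_nat_mult[symmetric])
    also have "\<dots> = 1" unfolding e by simp
    finally show ?thesis by simp
  qed
  have znz: "z \<noteq> 1"
  proof
    assume "z = 1"
    then obtain n :: int where n: "Im (2 * of_real pi * \<i> / of_nat k) = of_int (2 * n) * pi"
      unfolding z_def exp_eq_1 by blast
    have "Im (2 * of_real pi * \<i> / of_nat k) = 2 * pi / real k" by simp
    with n have h: "(2 * pi) * (1 / real k) = (2 * pi) * of_int n" by simp
    have "2 * pi \<noteq> 0" using pi_gt_zero by simp
    with h have "1 / real k = of_int n" by (rule mult_left_cancel[THEN iffD1, rotated])
    moreover have "0 < 1 / real k" "1 / real k < 1" using k2 by auto
    ultimately show False by (metis of_int_0_less_iff of_int_less_1_iff not_le zero_less_one int_one_le_iff_zero_less)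
  qed
  define H1 where "H1 = {h \<otimes> x [^] (i::nat) | h i. h \<in> {\<one>}}"
  have sH1: "subgroup H1 G" unfolding H1_def
    by (rule ext_step(1)[OF fin H f x(1) _ k_def z]) (use x in auto)
  obtain F1 where F1: "char_on G H1 F1" "F1 x = z"
    using ext_step(2)[OF fin H f x(1) _ k_def z] x unfolding H1_def by blast
  obtain F where F: "char_on G (carrier G) F" "\<forall>h\<in>H1. F h = F1 h"
    using ext_char[OF fin sH1 F1(1)] by blast
  have "x = \<one> \<otimes> x [^] (1::nat)" using x by simp
  then have "x \<in> H1" unfolding H1_def by blast
  then show ?thesis using F F1 znz by (intro exI[of _ F]) auto
qed

definition chars where "chars = {F. char_on G (carrier G) F \<and> F \<in> extensional (carrier G)}"

lemma char_root:
  assumes "char_on G (carrier G) F" "y \<in> carrier G"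
  shows "F y ^ order G = 1"
proof -
  have sg: "subgroup (carrier G) G" by (rule subgroup_self)
  have "F y ^ order G = F (y [^] order G)" using char_on_pow[OF sg assms(1) assms(2)] by simp
  also have "\<dots> = 1" using pow_order_eq_1[OF assms(2)] char_on_one[OF sg assms(1)] by simp
  finally show ?thesis .
qed

lemma char_norm:
  assumes fin: "finite (carrier G)" and "char_on G (carrier G) F" "y \<in> carrier G"
  shows "norm (F y) = 1"
proof -
  have ordpos: "0 < order G" unfolding order_def using fin one_closed card_gt_0_iff by blast
  show ?thesis using power_eq_1_iff[OF char_root[OF assms(2,3)]] ordpos by simp
qed

lemma finite_chars:
  assumes fin: "finite (carrier G)" shows "finite chars"
proof -
  have "chars \<subseteq> PiE (carrier G) (\<lambda>_. {z. z ^ order G = 1})"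
    unfolding chars_def using char_root by (auto simp: PiE_def Pi_def)
  moreover have "finite (PiE (carrier G) (\<lambda>_. {z::complex. z ^ order G = 1}))"
  proof (rule finite_PiE[OF fin])
    have ordpos: "0 < order G" unfolding order_def using fin one_closed card_gt_0_iff by blast
    show "finite {z::complex. z ^ order G = 1}" for i using ordpos by (intro finite_roots_unity) simp
  qed
  ultimately show ?thesis by (rule finite_subset)
qed

lemma triv_in_chars: "restrict (\<lambda>_. 1) (carrier G) \<in> chars"
  unfolding chars_def char_on_def by auto

lemma card_chars_pos: assumes fin: "finite (carrier G)" shows "card chars > 0"
  using finite_chars[OF fin] triv_in_chars card_gt_0_iff by blast

lemma orth1:
  assumes fin: "finite (carrier G)" and x: "x \<in> carrier G" "x \<noteq> \<one>"
  shows "(\<Sum>F\<in>chars. F x) = 0"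
proof -
  obtain F0 where F0: "char_on G (carrier G) F0" "F0 x \<noteq> 1" using sep_char[OF fin x] by blast
  have F0nz: "\<And>y. y \<in> carrier G \<Longrightarrow> F0 y \<noteq> 0" using F0(1) unfolding char_on_def by blast
  define j where "j F = restrict (\<lambda>y. F0 y * F y) (carrier G)" for F
  define i where "i F = restrict (\<lambda>y. F y / F0 y) (carrier G)" for F
  have "(\<Sum>F\<in>chars. F0 x * F x) = (\<Sum>F\<in>chars. F x)"
  proof (rule sum.reindex_bij_witness[where i = i and j = j])
    fix a assume a: "a \<in> chars"
    then have ae: "a \<in> extensional (carrier G)" unfolding chars_def by blast
    show "i (j a) = a" unfolding i_def j_def using ae F0nz by (auto simp: fun_eq_iff extensional_def)
    show "j a \<in> chars" using a F0(1) unfolding chars_def char_on_def j_def by auto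
    show "j a x = F0 x * a x" unfolding j_def using x by simp
  next
    fix b assume b: "b \<in> chars"
    then have be: "b \<in> extensional (carrier G)" unfolding chars_def by blast
    show "j (i b) = b" unfolding i_def j_def using be F0nz by (auto simp: fun_eq_iff extensional_def)
    show "i b \<in> chars" using b F0(1) F0nz unfolding chars_def char_on_def i_def by auto
  qed
  then have "F0 x * (\<Sum>F\<in>chars. F x) = (\<Sum>F\<in>chars. F x)" by (simp add: sum_distrib_left)
  then have "(F0 x - 1) * (\<Sum>F\<in>chars. F x) = 0" by (simp add: algebra_simps)
  then show ?thesis using F0(2) by simp
qed

lemma orth2:
  assumes fin: "finite (carrier G)" and m: "m \<in> carrier G" and n: "n \<in> carrier G"
  shows "(\<Sum>F\<in>chars. F m * cnj (F n)) = (if m = n then of_nat (card chars) else 0)"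
proof -
  have sg: "subgroup (carrier G) G" by (rule subgroup_self)
  have cj: "cnj (F y) = F (inv y)" if F: "F \<in> chars" and y: "y \<in> carrier G" for F y
  proof -
    have Fc: "char_on G (carrier G) F" using F unfolding chars_def by blast
    have "F y * F (inv y) = 1" using Fc y char_on_one[OF sg Fc] unfolding char_on_def
      by (metis inv_closed r_inv)
    moreover have "F y * cnj (F y) = 1"
      using complex_norm_square[of "F y"] char_norm[OF fin Fc y] by simp
    ultimately show ?thesis by (metis mult.left_commute mult.right_neutral mult.commute)
  qed
  have eq: "F m * cnj (F n) = F (m \<otimes> inv n)" if F: "F \<in> chars" for F
    using F cj[OF F n] m n unfolding chars_def char_on_def by auto
  show ?thesis
  proof (cases "m = n")
    case True
    have "F m * cnj (F n) = 1" if F: "F \<in> chars" for F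
      using complex_norm_square[of "F n"] char_norm[OF fin _ n] F True unfolding chars_def by auto
    then show ?thesis using True by simp
  next
    case False
    have "m \<otimes> inv n \<noteq> \<one>" using False m n by (metis inv_closed inv_equality inv_inv m_comm)
    then have "(\<Sum>F\<in>chars. F (m \<otimes> inv n)) = 0" using orth1[OF fin] m n by simp
    then show ?thesis using False eq by simp
  qed
qed

end


definition Zr :: "nat \<Rightarrow> nat monoid" where
  "Zr r = \<lparr>carrier = {x. x < r \<and> coprime x r}, monoid.mult = (\<lambda>x y. x * y mod r), one = 1 mod r\<rparr>"

lemma Zr_group: assumes r: "r \<ge> 1" shows "comm_group (Zr r)"
proof (rule comm_groupI)
  have r0: "r \<noteq> 0" using r by simp
  show "x \<otimes>\<^bsub>Zr r\<^esub> y \<in> carrier (Zr r)" if "x \<in> carrier (Zr r)" "y \<in> carrier (Zr r)" for x y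
    using that r0 by (auto simp: Zr_def)
  show "\<one>\<^bsub>Zr r\<^esub> \<in> carrier (Zr r)" using r0 by (auto simp: Zr_def)
  show "x \<otimes>\<^bsub>Zr r\<^esub> y \<otimes>\<^bsub>Zr r\<^esub> z = x \<otimes>\<^bsub>Zr r\<^esub> (y \<otimes>\<^bsub>Zr r\<^esub> z)" for x y z
    by (simp add: Zr_def mod_mult_left_eq mod_mult_right_eq mult.assoc)
  show "x \<otimes>\<^bsub>Zr r\<^esub> y = y \<otimes>\<^bsub>Zr r\<^esub> x" for x y by (simp add: Zr_def mult.commute)
  show "\<one>\<^bsub>Zr r\<^esub> \<otimes>\<^bsub>Zr r\<^esub> x = x" if "x \<in> carrier (Zr r)" for x
    using that by (simp add: Zr_def mod_mult_left_eq)
  show "\<exists>y\<in>carrier (Zr r). y \<otimes>\<^bsub>Zr r\<^esub> x = \<one>\<^bsub>Zr r\<^esub>" if x: "x \<in> carrier (Zr r)" for x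
  proof -
    have cx: "coprime x r" using x by (simp add: Zr_def)
    have tp: "totient r > 0" using r by simp
    define y where "y = x ^ (totient r - 1) mod r"
    have "y * x mod r = x ^ (totient r - 1) * x mod r" unfolding y_def by (simp add: mod_mult_left_eq)
    also have "x ^ (totient r - 1) * x = x ^ totient r" using tp
      by (metis Suc_diff_1 power_Suc2)
    also have "x ^ totient r mod r = 1 mod r" using euler_theorem[OF cx] by (simp add: cong_def)
    finally have e: "y * x mod r = 1 mod r" .
    have "y \<in> carrier (Zr r)" unfolding y_def Zr_def using r0 cx by auto
    then show ?thesis using e by (intro bexI[of _ y]) (auto simp: Zr_def)
  qed
qed

definition lift :: "nat \<Rightarrow> nat \<Rightarrow> (nat \<Rightarrow> complex) \<Rightarrow> nat \<Rightarrow> complex" where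
  "lift q r F n = (if coprime n q then F (n mod r) else 0)"

lemma coprime_dvd_mod: fixes m q r :: nat shows "coprime m q \<Longrightarrow> r dvd q \<Longrightarrow> coprime m r"
proof -
  assume a: "coprime m q" "r dvd q"
  then obtain s where "q = r * s" by (auto elim: dvdE)
  then show ?thesis using a(1) by (simp add: coprime_mult_right_iff)
qed

lemma lift_dch:
  assumes r: "r \<ge> 1" and q: "q \<ge> 1" and rq: "r dvd q" and F: "F \<in> comm_group.chars (Zr r)"
  shows "dirichlet_char q (lift q r F)"
proof -
  have cF: "char_on (Zr r) (carrier (Zr r)) F" using F unfolding comm_group.chars_def[OF Zr_group[OF r]] by blast
  have inC: "n mod r \<in> carrier (Zr r)" if "coprime n q" for n
    using that coprime_dvd_mod[OF that rq] r by (simp add: Zr_def)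
  show ?thesis unfolding dirichlet_char_def
  proof (intro conjI allI)
    show "1 \<le> q" by (rule q)
    show "lift q r F (m * n) = lift q r F m * lift q r F n" for m n
    proof (cases "coprime m q \<and> coprime n q")
      case True
      have "(m * n) mod r = (m mod r) \<otimes>\<^bsub>Zr r\<^esub> (n mod r)" by (simp add: Zr_def mod_mult_eq)
      then show ?thesis using True inC cF unfolding lift_def char_on_def by auto
    next
      case False then show ?thesis unfolding lift_def by auto
    qed
    show "lift q r F (n + q) = lift q r F n" for n
    proof -
      obtain s where "q = r * s" using rq by (auto elim: dvdE)
      then have "(n + q) mod r = n mod r" by simp
      moreover have "coprime (n + q) q = coprime n q" by (simp only: coprime_iff_gcd_eq_1 gcd_add1)
      ultimately show ?thesis unfolding lift_def by simp
    qed
    show "(lift q r F n = 0) = (\<not> coprime n q)" for n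
      using inC cF unfolding lift_def char_on_def by auto
  qed
qed

lemma cnj_dch: "dirichlet_char q ch \<Longrightarrow> dirichlet_char q (\<lambda>n. cnj (ch n))"
  unfolding dirichlet_char_def by auto

lemma conductor_le: assumes "dirichlet_char q ch" shows "conductor q ch \<le> q"
proof -
  have "q \<ge> 1" using assms unfolding dirichlet_char_def by blast
  moreover have "induced_mod q q ch" unfolding induced_mod_def
    by (intro conjI dvd_refl exI[of _ ch]) (use assms in auto)
  ultimately show ?thesis unfolding conductor_def by (intro Least_le) simp
qed

lemma lift_orth:
  assumes r: "r \<ge> 1" and q: "q \<ge> 1" and rq: "r dvd q"
  shows "(\<Sum>F\<in>comm_group.chars (Zr r). lift q r F m * cnj (lift q r F n)) =
    of_nat (card (comm_group.chars (Zr r))) *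
      (if coprime m q \<and> coprime n q \<and> int r dvd (int m - int n) then 1 else 0)"
proof (cases "coprime m q \<and> coprime n q")
  case True
  have G: "comm_group (Zr r)" by (rule Zr_group[OF r])
  have fin: "finite (carrier (Zr r))" by (simp add: Zr_def)
  have inC: "n mod r \<in> carrier (Zr r)" if "coprime n q" for n
    using that coprime_dvd_mod[OF that rq] r by (simp add: Zr_def)
  have "(\<Sum>F\<in>comm_group.chars (Zr r). lift q r F m * cnj (lift q r F n)) =
        (\<Sum>F\<in>comm_group.chars (Zr r). F (m mod r) * cnj (F (n mod r)))"
    using True unfolding lift_def by simp
  also have "\<dots> = (if m mod r = n mod r then of_nat (card (comm_group.chars (Zr r))) else 0)"
    by (rule comm_group.orth2[OF G fin inC inC]) (use True in auto)
  also have "(m mod r = n mod r) \<longleftrightarrow> int r dvd (int m - int n)"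
  proof -
    have "(m mod r = n mod r) \<longleftrightarrow> int m mod int r = int n mod int r"
      by (simp only: of_nat_eq_iff[symmetric, where 'a=int] zmod_int)
    also have "\<dots> \<longleftrightarrow> int r dvd (int m - int n)" by (rule mod_eq_dvd_iff)
    finally show ?thesis .
  qed
  finally show ?thesis using True by simp
next
  case False
  then show ?thesis unfolding lift_def by auto
qed



lemma harm_bound: "n \<ge> 1 \<Longrightarrow> (\<Sum>k\<in>{1..n}. 1 / real k) \<le> 1 + ln (real n)"
proof (induction n rule: dec_induct)
  case base then show ?case by simp
next
  case (step n)
  have n1: "real n \<ge> 1" using step.hyps by simp
  have "ln (real n + 1) - ln (real n) \<ge> 1 / (real n + 1)"
  proof -
    have x: "0 < real n / (real n + 1)" using n1 by simp
    have "ln (real n / (real n + 1)) \<le> real n / (real n + 1) - 1" by (rule ln_le_minus_one[OF x])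
    moreover have "ln (real n / (real n + 1)) = ln (real n) - ln (real n + 1)"
      using n1 by (simp add: ln_div)
    moreover have "real n / (real n + 1) - 1 = - (1 / (real n + 1))" using n1 by (simp add: field_simps)
    ultimately show ?thesis by linarith
  qed
  moreover have "(\<Sum>k\<in>{1..Suc n}. 1 / real k) = (\<Sum>k\<in>{1..n}. 1 / real k) + 1 / (real n + 1)"
    using step.hyps by (simp add: sum.atLeast_Suc_atMost_Suc_shift add.commute)
  ultimately show ?case using step.IH by (simp add: add.commute)
qed

lemma ln_le_powr: fixes x s :: real assumes "x \<ge> 1" "s > 0" shows "ln x \<le> x powr s / s"
proof -
  have "ln (x powr s) \<le> x powr s - 1" by (rule ln_le_minus_one) (use assms in simp)
  then have "s * ln x \<le> x powr s" using assms by (simp add: ln_powr)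
  then show ?thesis using assms by (simp add: field_simps)
qed

lemma inv_sq_telescope: "c0 \<ge> 1 \<Longrightarrow> (\<Sum>i<k. 1 / (real (c0 + i))\<^sup>2) \<le> 2 / real c0 - 2 / real (c0 + k)"
proof (induction k)
  case 0 then show ?case by simp
next
  case (Suc k)
  have c: "real (c0 + k) \<ge> 1" using Suc.prems by simp
  have "1 / (real (c0 + k))\<^sup>2 \<le> 2 / real (c0 + k) - 2 / real (c0 + Suc k)"
  proof -
    have "2 / real (c0 + k) - 2 / real (c0 + Suc k) = 2 / (real (c0 + k) * (real (c0 + k) + 1))"
      using c by (simp add: field_simps)
    also have "\<dots> \<ge> 1 / (real (c0 + k))\<^sup>2"
    proof -
      define a where "a = real (c0 + k)"
      have a1: "a \<ge> 1" using c unfolding a_def .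
      have "a \<le> a * a" using mult_left_mono[of 1 a a] a1 by simp
      then have "real (c0 + k) * (real (c0 + k) + 1) \<le> 2 * (real (c0 + k))\<^sup>2"
        unfolding a_def[symmetric] by (simp add: power2_eq_square algebra_simps)
      then have "2 / (2 * (real (c0 + k))\<^sup>2) \<le> 2 / (real (c0 + k) * (real (c0 + k) + 1))"
        using c by (intro frac_le) auto
      then show ?thesis by simp
    qed
    finally show ?thesis .
  qed
  then show ?case using Suc by simp
qed

lemma sum_inv_sq:
  fixes S :: "nat set"
  assumes "finite S" "\<And>c. c \<in> S \<Longrightarrow> real c \<ge> x" "x > 0"
  shows "(\<Sum>c\<in>S. 1 / (real c)\<^sup>2) \<le> 2 / x"
proof -
  define c0 where "c0 = nat \<lceil>x\<rceil>"
  have c0x: "real c0 \<ge> x" unfolding c0_def by linarith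
  have c01: "c0 \<ge> 1" unfolding c0_def using assms(3) by linarith
  have Sge: "c \<ge> c0" if "c \<in> S" for c using assms(2)[OF that] unfolding c0_def by linarith
  define k where "k = Suc (Max (insert 0 S))"
  have sub: "S \<subseteq> (\<lambda>i. c0 + i) ` {..<k}"
  proof
    fix c assume c: "c \<in> S"
    have "c \<le> Max (insert 0 S)" using assms(1) c by simp
    then have "c - c0 < k" unfolding k_def by linarith
    then show "c \<in> (\<lambda>i. c0 + i) ` {..<k}" using Sge[OF c] by (intro image_eqI[of _ _ "c - c0"]) auto
  qed
  have "(\<Sum>c\<in>S. 1 / (real c)\<^sup>2) \<le> (\<Sum>c\<in>(\<lambda>i. c0 + i) ` {..<k}. 1 / (real c)\<^sup>2)"
    by (rule sum_mono2[OF _ sub]) auto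
  also have "\<dots> = (\<Sum>i<k. 1 / (real (c0 + i))\<^sup>2)" by (subst sum.reindex) (auto simp: inj_on_def)
  also have "\<dots> \<le> 2 / real c0 - 2 / real (c0 + k)" by (rule inv_sq_telescope[OF c01])
  also have "\<dots> \<le> 2 / real c0" by simp
  also have "\<dots> \<le> 2 / x" using c0x assms(3) by (simp add: frac_le)
  finally show ?thesis .
qed

lemma totient_lower:
  assumes eta: "\<eta> > 0"
  shows "\<exists>K>0. \<forall>n::nat. n \<ge> 1 \<longrightarrow> real n \<le> K * real (totient n) * real n powr \<eta>"
proof -
  define T where "T = (2::real) powr (1 / \<eta>)"
  define L where "L = nat \<lceil>T\<rceil>"
  define K where "K = (2::real) ^ L"
  have Kpos: "K > 0" unfolding K_def by simp
  have main: "real n \<le> K * real (totient n) * real n powr \<eta>" if n: "n \<ge> 1" for n :: nat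
  proof -
    define P where "P = prime_factors n"
    define c where "c p = (if real p < T then (2::real) else 1)" for p :: nat
    have finP: "finite P" unfolding P_def by simp
    have pP: "prime p" if "p \<in> P" for p using that unfolding P_def by auto
    have fac: "1 / (c p * real p powr \<eta>) \<le> 1 - 1 / real p" if "p \<in> P" for p
    proof -
      have p2: "real p \<ge> 2" using prime_ge_2_nat[OF pP[OF that]] by simp
      have half: "1 / 2 \<le> 1 - 1 / real p" using p2 by (simp add: field_simps)
      show ?thesis
      proof (cases "real p < T")
        case True
        have "real p powr \<eta> \<ge> 1" using p2 eta by (intro ge_one_powr_ge_zero) auto
        then have "1 / (c p * real p powr \<eta>) \<le> 1 / 2" using True unfolding c_def
          by (intro frac_le) auto
        then show ?thesis using half by linarith
      next
        case False
        have "real p powr \<eta> \<ge> T powr \<eta>" using False eta p2 unfolding T_def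
          by (intro powr_mono2) auto
        also have "T powr \<eta> = 2" unfolding T_def using eta by (simp add: powr_powr)
        finally have "1 / (c p * real p powr \<eta>) \<le> 1 / 2" using False unfolding c_def
          by (intro frac_le) auto
        then show ?thesis using half by linarith
      qed
    qed
    have pos: "0 \<le> 1 / (c p * real p powr \<eta>)" for p unfolding c_def by simp
    have "(\<Prod>p\<in>P. 1 / (c p * real p powr \<eta>)) \<le> (\<Prod>p\<in>P. 1 - 1 / real p)"
      by (rule prod_mono) (use fac pos in auto)
    moreover have "(\<Prod>p\<in>P. 1 / (c p * real p powr \<eta>)) = 1 / ((\<Prod>p\<in>P. c p) * (\<Prod>p\<in>P. real p) powr \<eta>)"
      using pP prime_gt_0_nat by (simp add: prod_dividef prod.distrib prod_powr_distrib)
    moreover have "(\<Prod>p\<in>P. c p) \<le> K"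
    proof -
      have "(\<Prod>p\<in>P. c p) = (\<Prod>p\<in>{p\<in>P. real p < T}. 2)"
        unfolding c_def using finP by (simp add: prod.If_cases Int_def)
      also have "\<dots> = 2 ^ card {p\<in>P. real p < T}" by simp
      also have "card {p\<in>P. real p < T} \<le> card {..<L}"
      proof (rule card_mono)
        show "{p \<in> P. real p < T} \<subseteq> {..<L}"
        proof
          fix p assume "p \<in> {p \<in> P. real p < T}"
          then have "real p < T" by simp
          moreover have "T \<le> real_of_int \<lceil>T\<rceil>" by (rule le_of_int_ceiling)
          ultimately have "real_of_int (int p) < real_of_int \<lceil>T\<rceil>" by simp linarith
          then have "int p < \<lceil>T\<rceil>" by (simp only: of_int_less_iff)
          then show "p \<in> {..<L}" unfolding L_def by simp
        qed
      qed simp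
      then have "(2::real) ^ card {p\<in>P. real p < T} \<le> 2 ^ L" by (intro power_increasing) auto
      finally show ?thesis unfolding K_def .
    qed
    moreover have "(\<Prod>p\<in>P. real p) \<le> real n"
    proof -
      have "(\<Prod>p\<in>P. real p) \<le> (\<Prod>p\<in>P. real (p ^ multiplicity p n))"
      proof (rule prod_mono)
        fix p assume p: "p \<in> P"
        then have "multiplicity p n > 0" unfolding P_def by (simp add: prime_factors_multiplicity)
        then have "p \<le> p ^ multiplicity p n" using prime_gt_0_nat[OF pP[OF p]]
          by (simp add: self_le_power)
        then show "0 \<le> real p \<and> real p \<le> real (p ^ multiplicity p n)" by simp
      qed
      also have "\<dots> = real (\<Prod>p\<in>P. p ^ multiplicity p n)" by simp
      also have "(\<Prod>p\<in>P. p ^ multiplicity p n) = n" unfolding P_def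
        using prime_factorization_nat[of n] n by simp
      finally show ?thesis .
    qed
    moreover have Pp1: "(\<Prod>p\<in>P. real p) \<ge> 1" using pP prime_ge_1_nat
      by (intro prod_ge_1) auto
    moreover have cp1: "(\<Prod>p\<in>P. c p) \<ge> 1" unfolding c_def by (intro prod_ge_1) auto
    ultimately have low: "1 / (K * real n powr \<eta>) \<le> (\<Prod>p\<in>P. 1 - 1 / real p)"
    proof -
      assume a: "(\<Prod>p\<in>P. 1 / (c p * real p powr \<eta>)) \<le> (\<Prod>p\<in>P. 1 - 1 / real p)"
        "(\<Prod>p\<in>P. 1 / (c p * real p powr \<eta>)) = 1 / ((\<Prod>p\<in>P. c p) * (\<Prod>p\<in>P. real p) powr \<eta>)"
        "(\<Prod>p\<in>P. c p) \<le> K" "(\<Prod>p\<in>P. real p) \<le> real n" "(\<Prod>p\<in>P. real p) \<ge> 1" "(\<Prod>p\<in>P. c p) \<ge> 1"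
      have "(\<Prod>p\<in>P. real p) powr \<eta> \<le> real n powr \<eta>" using a eta by (intro powr_mono2) auto
      moreover have "(\<Prod>p\<in>P. real p) powr \<eta> > 0" using a by simp
      ultimately have "(\<Prod>p\<in>P. c p) * (\<Prod>p\<in>P. real p) powr \<eta> \<le> K * real n powr \<eta>"
        using a by (intro mult_mono) auto
      then have "1 / (K * real n powr \<eta>) \<le> 1 / ((\<Prod>p\<in>P. c p) * (\<Prod>p\<in>P. real p) powr \<eta>)"
        using a \<open>(\<Prod>p\<in>P. real p) powr \<eta> > 0\<close> by (intro divide_left_mono) auto
      then show ?thesis using a by linarith
    qed
    have tot: "real (totient n) = real n * (\<Prod>p\<in>P. 1 - 1 / real p)" unfolding P_def by (rule totient_formula2)
    have npos: "real n > 0" "real n powr \<eta> > 0" using n by auto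
    have "real n * (1 / (K * real n powr \<eta>)) \<le> real (totient n)"
      unfolding tot using low npos by (intro mult_left_mono) auto
    then show ?thesis using npos Kpos by (simp add: field_simps)
  qed
  show ?thesis using Kpos main by blast
qed



lemma W_bounded:
  assumes "smooth_fun W" "\<forall>x. x \<notin> {1..2} \<longrightarrow> W x = 0"
  shows "\<exists>Wm\<ge>0. \<forall>x. \<bar>W x\<bar> \<le> Wm"
proof -
  have "W differentiable (at x)" for x using assms(1) unfolding smooth_fun_def
    by (metis funpow_0)
  then have "continuous_on {1..2} W"
    by (intro differentiable_imp_continuous_on differentiable_at_imp_differentiable_on) auto
  then have "bounded (W ` {1..2})" by (intro compact_imp_bounded compact_continuous_image) auto
  then obtain c where c: "\<forall>y\<in>W ` {1..2}. \<bar>y\<bar> \<le> c" unfolding bounded_real by blast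
  have "\<bar>W x\<bar> \<le> max c 0" for x
    using c assms(2) by (cases "x \<in> {1..2}") (auto, force)
  then show ?thesis by (intro exI[of _ "max c 0"]) auto
qed

lemma card_d:
  fixes A :: nat and N :: nat and y :: real
  assumes "A \<ge> 1" "y \<ge> 0"
  shows "real (card {d\<in>{1..N}. real (A * d) \<le> y}) \<le> y / real A"
proof -
  have "{d\<in>{1..N}. real (A * d) \<le> y} \<subseteq> {1..nat \<lfloor>y / real A\<rfloor>}"
  proof
    fix d assume d: "d \<in> {d\<in>{1..N}. real (A * d) \<le> y}"
    then have "real A * real d \<le> y" by simp
    then have "real d \<le> y / real A" using assms by (simp add: field_simps)
    then show "d \<in> {1..nat \<lfloor>y / real A\<rfloor>}" using d le_nat_floor by auto
  qed
  then have "card {d\<in>{1..N}. real (A * d) \<le> y} \<le> nat \<lfloor>y / real A\<rfloor>"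
    using card_mono[of "{1..nat \<lfloor>y / real A\<rfloor>}"] by fastforce
  then have "real (card {d\<in>{1..N}. real (A * d) \<le> y}) \<le> real (nat \<lfloor>y / real A\<rfloor>)" by simp
  also have "\<dots> \<le> y / real A" using assms by simp
  finally show ?thesis .
qed


lemma weight_sum:
  fixes Q C Wm Kp \<delta> :: real and N :: nat
  assumes Q: "Q \<ge> 2" and C: "C \<ge> 1" and Wm: "Wm \<ge> 0" and Kp: "Kp > 0" and \<delta>: "\<delta> > 0"
    and tot: "\<forall>n::nat. n \<ge> 1 \<longrightarrow> real n \<le> Kp * real (totient n) * real n powr \<delta>"
  shows "(\<Sum>(a,c,d)\<in>{1..N}\<times>{1..N}\<times>{1..N}. if C < real c \<and> real (a^2*c*d) \<le> 2*Q
            then Wm / (real a * real (totient (a*c))) else 0)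
         \<le> 8 * Wm * Kp * 2 powr \<delta> * Q powr (1+\<delta>) / C"
proof -
  define A0 where "A0 = Wm * Kp * 2 powr \<delta> * Q powr \<delta>"
  have A0: "A0 \<ge> 0" unfolding A0_def using Wm Kp by simp
  have pt: "Wm / (real a * real (totient (a*c))) \<le> A0 / (real a ^ 2 * real c)"
    if a: "a \<ge> 1" and c: "c \<ge> 1" and d: "d \<ge> 1" and le: "real (a^2*c*d) \<le> 2*Q" for a c d :: nat
  proof -
    define n where "n = a * c"
    have n1: "n \<ge> 1" unfolding n_def using a c by simp
    have tn: "real (totient n) > 0" using n1 by simp
    have ad: "a * d \<ge> 1" using a d by simp
    have "a * c \<le> a * c * (a * d)" using ad by simp
    also have "a * c * (a * d) = a^2*c*d" by (simp add: power2_eq_square mult_ac)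
    finally have "n \<le> a^2*c*d" unfolding n_def .
    then have n2Q: "real n \<le> 2 * Q" using le by linarith
    have "real n powr \<delta> \<le> (2 * Q) powr \<delta>" using n2Q n1 \<delta> by (intro powr_mono2) auto
    also have "\<dots> = 2 powr \<delta> * Q powr \<delta>" using Q by (simp add: powr_mult)
    finally have npow: "real n powr \<delta> \<le> 2 powr \<delta> * Q powr \<delta>" .
    have "real n \<le> Kp * real (totient n) * real n powr \<delta>" using tot n1 by blast
    then have "1 / real (totient n) \<le> Kp * real n powr \<delta> / real n"
      using tn n1 by (simp add: field_simps)
    also have "\<dots> \<le> Kp * (2 powr \<delta> * Q powr \<delta>) / real n"
      using npow Kp n1 by (intro divide_right_mono mult_left_mono) auto
    finally have inv: "1 / real (totient n) \<le> Kp * (2 powr \<delta> * Q powr \<delta>) / real n" .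
    have "Wm / (real a * real (totient (a*c))) = (Wm / real a) * (1 / real (totient n))"
      unfolding n_def by simp
    also have "\<dots> \<le> (Wm / real a) * (Kp * (2 powr \<delta> * Q powr \<delta>) / real n)"
      using inv Wm a by (intro mult_left_mono) auto
    also have "\<dots> = A0 / (real a ^ 2 * real c)" unfolding A0_def n_def using a c
      by (simp add: field_simps power2_eq_square)
    finally show ?thesis .
  qed
  define g where "g a c d = (if C < real c \<and> real (a^2*c*d) \<le> 2*Q then A0 / (real a ^ 2 * real c) else 0)"
    for a c d :: nat
  have step1: "(\<Sum>(a,c,d)\<in>{1..N}\<times>{1..N}\<times>{1..N}. if C < real c \<and> real (a^2*c*d) \<le> 2*Q
            then Wm / (real a * real (totient (a*c))) else 0)
      \<le> (\<Sum>(a,c,d)\<in>{1..N}\<times>{1..N}\<times>{1..N}. g a c d)"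
    by (rule sum_mono) (auto simp: g_def intro!: pt)
  also have "\<dots> = (\<Sum>a\<in>{1..N}. \<Sum>c\<in>{1..N}. \<Sum>d\<in>{1..N}. g a c d)"
    by (simp add: sum.cartesian_product)
  also have "\<dots> \<le> (\<Sum>a\<in>{1..N}. \<Sum>c\<in>{1..N}.
       (if C < real c then 2 * Q * A0 * (1 / (real a)\<^sup>2) * (1 / (real c)\<^sup>2) else 0))"
  proof (intro sum_mono)
    fix a c assume a: "a \<in> {1..N}" and c: "c \<in> {1..N}"
    show "(\<Sum>d\<in>{1..N}. g a c d) \<le>
      (if C < real c then 2 * Q * A0 * (1 / (real a)\<^sup>2) * (1 / (real c)\<^sup>2) else 0)"
    proof (cases "C < real c")
      case False then show ?thesis unfolding g_def by simp
    next
      case True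
      have A1: "a^2 * c \<ge> 1" using a c by simp
      have "(\<Sum>d\<in>{1..N}. g a c d) = (\<Sum>d\<in>{1..N}. if real (a^2*c*d) \<le> 2*Q then A0 / (real a ^ 2 * real c) else 0)"
        unfolding g_def using True by (intro sum.cong) auto
      also have "\<dots> = (\<Sum>d\<in>{d\<in>{1..N}. real (a^2*c*d) \<le> 2*Q}. A0 / (real a ^ 2 * real c))"
        by (rule sum.inter_filter[symmetric]) simp
      also have "\<dots> = real (card {d\<in>{1..N}. real (a^2*c*d) \<le> 2*Q}) * (A0 / (real a ^ 2 * real c))"
        by (simp only: sum_constant)
      also have "\<dots> \<le> (2 * Q / real (a^2*c)) * (A0 / (real a ^ 2 * real c))"
        using card_d[OF A1, of "2*Q" N] Q A0 a c by (intro mult_right_mono) auto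
      also have "\<dots> = 2 * Q * A0 * (1 / (real a)\<^sup>2) * (1 / (real c)\<^sup>2) * (1 / (real a)\<^sup>2)"
        using a c by (simp add: field_simps power2_eq_square)
      also have "\<dots> \<le> 2 * Q * A0 * (1 / (real a)\<^sup>2) * (1 / (real c)\<^sup>2)"
        using a Q A0 by (intro mult_left_le) auto
      finally show ?thesis using True by simp
    qed
  qed
  also have "\<dots> = (\<Sum>a\<in>{1..N}. 2 * Q * A0 * (1 / (real a)\<^sup>2) *
       (\<Sum>c\<in>{c\<in>{1..N}. C < real c}. 1 / (real c)\<^sup>2))"
  proof (rule sum.cong[OF refl])
    fix a :: nat
    have "(\<Sum>c\<in>{1..N}. if C < real c then 2 * Q * A0 * (1 / (real a)\<^sup>2) * (1 / (real c)\<^sup>2) else 0)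
      = (\<Sum>c\<in>{c\<in>{1..N}. C < real c}. 2 * Q * A0 * (1 / (real a)\<^sup>2) * (1 / (real c)\<^sup>2))"
      by (rule sum.inter_filter[symmetric]) simp
    also have "\<dots> = 2 * Q * A0 * (1 / (real a)\<^sup>2) * (\<Sum>c\<in>{c\<in>{1..N}. C < real c}. 1 / (real c)\<^sup>2)"
      by (rule sum_distrib_left[symmetric])
    finally show "(\<Sum>c\<in>{1..N}. if C < real c then 2 * Q * A0 * (1 / (real a)\<^sup>2) * (1 / (real c)\<^sup>2) else 0)
      = 2 * Q * A0 * (1 / (real a)\<^sup>2) * (\<Sum>c\<in>{c\<in>{1..N}. C < real c}. 1 / (real c)\<^sup>2)" .
  qed
  also have "\<dots> \<le> (\<Sum>a\<in>{1..N}. 2 * Q * A0 * (1 / (real a)\<^sup>2) * (2 / C))"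
  proof (intro sum_mono mult_left_mono)
    show "(\<Sum>c\<in>{c\<in>{1..N}. C < real c}. 1 / (real c)\<^sup>2) \<le> 2 / C"
      using C by (intro sum_inv_sq) auto
    show "0 \<le> 2 * Q * A0 * (1 / (real a)\<^sup>2)" for a using Q A0 by simp
  qed
  also have "\<dots> = 2 * Q * A0 * (2 / C) * (\<Sum>a\<in>{1..N}. 1 / (real a)\<^sup>2)"
    by (simp add: sum_distrib_left sum_distrib_right mult_ac)
  also have "\<dots> \<le> 2 * Q * A0 * (2 / C) * 2"
  proof -
    have "(\<Sum>a\<in>{1..N}. 1 / (real a)\<^sup>2) \<le> 2 / 1" by (rule sum_inv_sq) auto
    then show ?thesis using Q A0 C by (intro mult_left_mono) auto
  qed
  also have "\<dots> = 8 * Wm * Kp * 2 powr \<delta> * Q powr (1+\<delta>) / C"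
    unfolding A0_def using Q by (simp add: powr_add field_simps)
  finally show ?thesis .
qed


definition Uw :: "(real \<Rightarrow> real) \<Rightarrow> real \<Rightarrow> nat \<times> nat \<times> nat \<Rightarrow> real" where
  "Uw W Q = (\<lambda>(a, c, d). W (real (a^2 * c * d) / Q) * real_of_int (moebius_mu a) * real_of_int (moebius_mu (a * c))
                        / (real a * real (totient (a * c))))"

definition Us :: "real \<Rightarrow> nat \<Rightarrow> nat \<Rightarrow> (nat \<times> nat \<times> nat) set" where
  "Us C m n = {(a, c, d). a \<ge> 1 \<and> c \<ge> 1 \<and> d \<ge> 1 \<and> coprime (a * c * d) (m * n)
                  \<and> int (a * d) dvd (int m - int n) \<and> real c > C}"

lemma U_fun_alt: "U_fun W Q C m n = infsum (Uw W Q) (Us C m n)"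
  unfolding U_fun_def Uw_def Us_def by (rule refl)

lemma le_mul1: "j \<ge> 1 \<Longrightarrow> (k::nat) \<le> k * j"
  using mult_le_mono2[of 1 j k] by simp

lemma big_prod:
  fixes x y z :: nat assumes "x \<ge> 1" "y \<ge> 1" "z \<ge> 1"
  shows "x \<le> x^2*y*z" "y \<le> x^2*y*z" "z \<le> x^2*y*z" "x * y * z \<le> x^2*y*z" "x * y \<le> x^2*y*z"
proof -
  have e1: "x^2*y*z = x * (x*y*z)" by (simp add: power2_eq_square mult_ac)
  have e2: "x^2*y*z = y * (x^2*z)" by (simp add: mult_ac)
  have e3: "x^2*y*z = z * (x^2*y)" by (simp add: mult_ac)
  have e4: "x^2*y*z = (x*y*z) * x" by (simp add: power2_eq_square mult_ac)
  have e5: "x^2*y*z = (x*y) * (x*z)" by (simp add: power2_eq_square mult_ac)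
  have p: "x*y*z \<ge> 1" "x^2*z \<ge> 1" "x^2*y \<ge> 1" "x*z \<ge> 1" using assms by auto
  show "x \<le> x^2*y*z" unfolding e1 by (rule le_mul1[OF p(1)])
  show "y \<le> x^2*y*z" unfolding e2 by (rule le_mul1[OF p(2)])
  show "z \<le> x^2*y*z" unfolding e3 by (rule le_mul1[OF p(3)])
  show "x * y * z \<le> x^2*y*z" unfolding e4 by (rule le_mul1[OF assms(1)])
  show "x * y \<le> x^2*y*z" unfolding e5 by (rule le_mul1[OF p(4)])
qed

lemma U_box:
  assumes W0: "\<forall>x. x \<notin> {1..2} \<longrightarrow> W x = 0" and Q: "Q > 0"
  shows "U_fun W Q C m n = (\<Sum>t\<in>{1..nat \<lceil>2*Q\<rceil>}\<times>{1..nat \<lceil>2*Q\<rceil>}\<times>{1..nat \<lceil>2*Q\<rceil>}.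
            if t \<in> Us C m n then Uw W Q t else 0)"
proof -
  define N where "N = nat \<lceil>2*Q\<rceil>"
  define Bx where "Bx = {1..N}\<times>{1..N}\<times>{1..N}"
  have finB: "finite Bx" unfolding Bx_def by simp
  have zero: "Uw W Q t = 0" if t: "t \<in> Us C m n - Bx" for t
  proof -
    obtain x y z where txyz: "t = (x, y, z)" by (cases t) auto
    have ge: "x \<ge> 1" "y \<ge> 1" "z \<ge> 1" using t unfolding txyz Us_def by auto
    have "x > N \<or> y > N \<or> z > N" using t ge unfolding txyz Bx_def by auto
    then have "x^2*y*z > N" using big_prod[OF ge] by linarith
    then have "real (x^2*y*z) > 2 * Q" unfolding N_def by linarith
    then have "real (x^2*y*z) / Q > 2" using Q by (simp add: field_simps)
    then have "W (real (x^2*y*z) / Q) = 0" using W0 by auto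
    then show ?thesis unfolding txyz Uw_def by simp
  qed
  have "U_fun W Q C m n = infsum (Uw W Q) (Us C m n)" by (rule U_fun_alt)
  also have "\<dots> = infsum (Uw W Q) (Us C m n \<inter> Bx)"
    by (rule infsum_cong_neutral) (use zero in auto)
  also have "\<dots> = sum (Uw W Q) (Us C m n \<inter> Bx)" using finB by simp
  also have "Us C m n \<inter> Bx = {t\<in>Bx. t \<in> Us C m n}" by auto
  also have "sum (Uw W Q) {t\<in>Bx. t \<in> Us C m n} = (\<Sum>t\<in>Bx. if t \<in> Us C m n then Uw W Q t else 0)"
    by (rule sum.inter_filter[OF finB])
  finally show ?thesis unfolding Bx_def N_def .
qed

lemma full_bound:
  fixes a b :: "nat \<Rightarrow> complex" and x y z :: nat and Ms :: "nat set"
  assumes fin: "finite Ms" and xyz: "x \<ge> 1" "y \<ge> 1" "z \<ge> 1" and q2Q: "real (x*y*z) \<le> 2*Q"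
    and chsum: "\<And>q \<psi>. q \<ge> 1 \<Longrightarrow> real q \<le> 2*Q \<Longrightarrow> dirichlet_char q \<psi> \<Longrightarrow>
        norm (\<Sum>m\<in>Ms. a m * \<psi> m) \<le> R \<and> norm (\<Sum>n\<in>Ms. b n * \<psi> n) \<le> R"
  shows "norm (\<Sum>(m,n)\<in>Ms\<times>Ms. a m * b n *
      (if coprime (x*y*z) (m*n) \<and> int (x*z) dvd (int m - int n) then 1 else 0)) \<le> R^2"
proof -
  define r where "r = x * z"
  define q where "q = x * y * z"
  have r1: "r \<ge> 1" unfolding r_def using xyz by simp
  have q1: "q \<ge> 1" unfolding q_def using xyz by simp
  have rq: "r dvd q" unfolding r_def q_def by (simp add: mult_ac)
  define Ch where "Ch = comm_group.chars (Zr r)"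
  define Kc where "Kc = card Ch"
  have G: "comm_group (Zr r)" by (rule Zr_group[OF r1])
  have finC: "finite (carrier (Zr r))" by (simp add: Zr_def)
  have finCh: "finite Ch" unfolding Ch_def by (rule comm_group.finite_chars[OF G finC])
  have Kc: "Kc > 0" unfolding Kc_def Ch_def by (rule comm_group.card_chars_pos[OF G finC])
  have ind: "(if coprime (x*y*z) (m*n) \<and> int (x*z) dvd (int m - int n) then 1 else 0)
      = (1 / of_nat Kc) * (\<Sum>F\<in>Ch. lift q r F m * cnj (lift q r F n))" for m n
  proof -
    have "(\<Sum>F\<in>Ch. lift q r F m * cnj (lift q r F n)) = of_nat Kc *
       (if coprime m q \<and> coprime n q \<and> int r dvd (int m - int n) then 1 else 0)"
      unfolding Ch_def Kc_def by (rule lift_orth[OF r1 q1 rq])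
    moreover have "coprime (x*y*z) (m*n) \<longleftrightarrow> coprime m q \<and> coprime n q"
      unfolding q_def by (auto simp: coprime_commute)
    ultimately show ?thesis using Kc unfolding r_def by simp
  qed
  have dA: "dirichlet_char q (lift q r F)" if "F \<in> Ch" for F
    using lift_dch[OF r1 q1 rq] that unfolding Ch_def by blast
  have dB: "dirichlet_char q (\<lambda>n. cnj (lift q r F n))" if "F \<in> Ch" for F
    by (rule cnj_dch[OF dA[OF that]])
  have qQ: "real q \<le> 2*Q" unfolding q_def using q2Q .
  have "(\<Sum>(m,n)\<in>Ms\<times>Ms. a m * b n *
      (if coprime (x*y*z) (m*n) \<and> int (x*z) dvd (int m - int n) then 1 else 0))
     = (\<Sum>(m,n)\<in>Ms\<times>Ms. (1 / of_nat Kc) * (\<Sum>F\<in>Ch. (a m * lift q r F m) * (b n * cnj (lift q r F n))))"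
  proof (rule sum.cong[OF refl])
    fix p assume "p \<in> Ms \<times> Ms"
    obtain m n where p: "p = (m, n)" by (cases p) auto
    have "a m * b n * (if coprime (x*y*z) (m*n) \<and> int (x*z) dvd (int m - int n) then 1 else 0)
      = a m * b n * ((1 / of_nat Kc) * (\<Sum>F\<in>Ch. lift q r F m * cnj (lift q r F n)))"
      by (simp only: ind)
    also have "\<dots> = (1 / of_nat Kc) * (\<Sum>F\<in>Ch. (a m * lift q r F m) * (b n * cnj (lift q r F n)))"
      by (simp add: sum_distrib_left mult_ac)
    finally show "(case p of (m, n) \<Rightarrow> a m * b n *
      (if coprime (x*y*z) (m*n) \<and> int (x*z) dvd (int m - int n) then 1 else 0)) =
      (case p of (m, n) \<Rightarrow> (1 / of_nat Kc) * (\<Sum>F\<in>Ch. (a m * lift q r F m) * (b n * cnj (lift q r F n))))"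
      unfolding p by simp
  qed
  also have "\<dots> = (1 / of_nat Kc) * (\<Sum>F\<in>Ch. \<Sum>(m,n)\<in>Ms\<times>Ms. (a m * lift q r F m) * (b n * cnj (lift q r F n)))"
    by (simp add: sum_distrib_left case_prod_beta sum.swap[of _ Ch])
  also have "\<dots> = (1 / of_nat Kc) * (\<Sum>F\<in>Ch. (\<Sum>m\<in>Ms. a m * lift q r F m) * (\<Sum>n\<in>Ms. b n * cnj (lift q r F n)))"
    by (simp add: sum_product sum.cartesian_product)
  finally have eq: "(\<Sum>(m,n)\<in>Ms\<times>Ms. a m * b n *
      (if coprime (x*y*z) (m*n) \<and> int (x*z) dvd (int m - int n) then 1 else 0)) =
      (1 / of_nat Kc) * (\<Sum>F\<in>Ch. (\<Sum>m\<in>Ms. a m * lift q r F m) * (\<Sum>n\<in>Ms. b n * cnj (lift q r F n)))" .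
  have each: "norm ((\<Sum>m\<in>Ms. a m * lift q r F m) * (\<Sum>n\<in>Ms. b n * cnj (lift q r F n))) \<le> R^2"
    if F: "F \<in> Ch" for F
  proof -
    have A: "norm (\<Sum>m\<in>Ms. a m * lift q r F m) \<le> R" using chsum[OF q1 qQ dA[OF F]] by blast
    have B: "norm (\<Sum>n\<in>Ms. b n * cnj (lift q r F n)) \<le> R" using chsum[OF q1 qQ dB[OF F]] by blast
    have R0: "0 \<le> R" using A norm_ge_zero order_trans by blast
    have "norm ((\<Sum>m\<in>Ms. a m * lift q r F m) * (\<Sum>n\<in>Ms. b n * cnj (lift q r F n))) =
      norm (\<Sum>m\<in>Ms. a m * lift q r F m) * norm (\<Sum>n\<in>Ms. b n * cnj (lift q r F n))" by (rule norm_mult)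
    also have "\<dots> \<le> R * R" using A B R0 by (intro mult_mono) auto
    finally show ?thesis by (simp add: power2_eq_square)
  qed
  have "norm (\<Sum>F\<in>Ch. (\<Sum>m\<in>Ms. a m * lift q r F m) * (\<Sum>n\<in>Ms. b n * cnj (lift q r F n)))
      \<le> (\<Sum>F\<in>Ch. R^2)"
    by (rule order_trans[OF norm_sum sum_mono]) (use each in auto)
  also have "\<dots> = of_nat Kc * R^2" unfolding Kc_def by simp
  finally have "norm (\<Sum>F\<in>Ch. (\<Sum>m\<in>Ms. a m * lift q r F m) * (\<Sum>n\<in>Ms. b n * cnj (lift q r F n)))
      \<le> of_nat Kc * R^2" .
  then show ?thesis unfolding eq using Kc by (simp add: norm_mult norm_divide field_simps)
qed


lemma mu_abs: "\<bar>real_of_int (moebius_mu n)\<bar> \<le> 1"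
  by (simp add: moebius_mu_def power_abs)

lemma Ms_eq: assumes "X \<ge> 1" shows "{m::nat. 1 \<le> m \<and> real m \<le> X} = {1..nat \<lfloor>X\<rfloor>}"
proof -
  have "(1 \<le> m \<and> real m \<le> X) \<longleftrightarrow> m \<in> {1..nat \<lfloor>X\<rfloor>}" for m :: nat
  proof
    assume "1 \<le> m \<and> real m \<le> X"
    then show "m \<in> {1..nat \<lfloor>X\<rfloor>}" using le_nat_floor by auto
  next
    assume m: "m \<in> {1..nat \<lfloor>X\<rfloor>}"
    then have "real m \<le> real (nat \<lfloor>X\<rfloor>)" by simp
    also have "\<dots> \<le> X" using assms by simp
    finally show "1 \<le> m \<and> real m \<le> X" using m by simp
  qed
  then show ?thesis by blast
qed

lemma dch_one: "dirichlet_char 1 (\<lambda>_. 1)"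
  unfolding dirichlet_char_def by simp

lemma split_offdiag:
  fixes f :: "nat \<times> nat \<Rightarrow> complex"
  assumes "finite Ms"
  shows "(\<Sum>p\<in>{p\<in>Ms\<times>Ms. fst p \<noteq> snd p}. f p) = (\<Sum>p\<in>Ms\<times>Ms. f p) - (\<Sum>m\<in>Ms. f (m, m))"
proof -
  have fin: "finite (Ms \<times> Ms)" using assms by simp
  have "(\<Sum>p\<in>Ms\<times>Ms. f p) = (\<Sum>p\<in>Ms\<times>Ms. (if fst p \<noteq> snd p then f p else 0) + (if fst p = snd p then f p else 0))"
    by (intro sum.cong) auto
  also have "\<dots> = (\<Sum>p\<in>Ms\<times>Ms. if fst p \<noteq> snd p then f p else 0) + (\<Sum>p\<in>Ms\<times>Ms. if fst p = snd p then f p else 0)"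
    by (rule sum.distrib)
  also have "(\<Sum>p\<in>Ms\<times>Ms. if fst p \<noteq> snd p then f p else 0) = (\<Sum>p\<in>{p\<in>Ms\<times>Ms. fst p \<noteq> snd p}. f p)"
    by (rule sum.inter_filter[OF fin, symmetric])
  also have "(\<Sum>p\<in>Ms\<times>Ms. if fst p = snd p then f p else 0) = (\<Sum>m\<in>Ms. \<Sum>n\<in>Ms. if m = n then f (m, n) else 0)"
    by (auto simp: sum.cartesian_product intro!: sum.cong)
  also have "\<dots> = (\<Sum>m\<in>Ms. f (m, m))" using assms by (simp add: sum.delta)
  finally show ?thesis by simp
qed

theorem lemma3:
  fixes W :: "real \<Rightarrow> real" and B :: "real \<Rightarrow> real \<Rightarrow> real" and \<epsilon> :: real
  assumes "smooth_fun W" and "\<forall>x. x \<notin> {1..2} \<longrightarrow> W x = 0" and "\<epsilon> > 0"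
  shows "\<exists>M. \<forall>(Q::real) (X::real) (C::real) (a::nat \<Rightarrow> complex) (b::nat \<Rightarrow> complex).
     Q \<ge> 2 \<longrightarrow> 1 \<le> X \<longrightarrow> X \<le> Q^2 \<longrightarrow> C \<ge> 1 \<longrightarrow>
     (\<forall>n. real n > X \<longrightarrow> a n = 0 \<and> b n = 0) \<longrightarrow>
     (\<forall>\<delta> K c l u v q \<psi>. \<delta> > 0 \<longrightarrow> K > 0 \<longrightarrow> c \<ge> 1 \<longrightarrow> l \<ge> 1 \<longrightarrow>
        real c \<le> K * X \<longrightarrow> real l \<le> K * X \<longrightarrow> u \<le> K * X \<longrightarrow> v \<le> K * X \<longrightarrow>
        dirichlet_char q \<psi> \<longrightarrow> real (conductor q \<psi>) \<le> K * Q \<longrightarrow>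
          norm (\<Sum>m | 1 \<le> m \<and> real m \<le> u \<and> coprime m c. a (m * l) * \<psi> m)
            \<le> B \<delta> K * real l powr (-1/2) * Q powr \<delta>
        \<and> norm (\<Sum>n | 1 \<le> n \<and> real n \<le> v \<and> coprime n c. b (n * l) * \<psi> n)
            \<le> B \<delta> K * real l powr (-1/2) * Q powr \<delta>) \<longrightarrow>
     norm (\<Sum>(m, n) | 1 \<le> m \<and> real m \<le> X \<and> 1 \<le> n \<and> real n \<le> X \<and> m \<noteq> n.
              a m * b n * complex_of_real (U_fun W Q C m n))
       \<le> M * (Q / C) * Q powr \<epsilon>"
proof -
  define d0 where "d0 = \<epsilon> / 4"
  have d0: "d0 > 0" unfolding d0_def using assms(3) by simp
  obtain Wm where Wm: "Wm \<ge> 0" "\<forall>x. \<bar>W x\<bar> \<le> Wm" using W_bounded[OF assms(1,2)] by blast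
  obtain Kp where Kp: "Kp > 0" "\<forall>n::nat. n \<ge> 1 \<longrightarrow> real n \<le> Kp * real (totient n) * real n powr d0"
    using totient_lower[OF d0] by blast
  define \<beta> where "\<beta> = \<bar>B d0 2\<bar>"
  define M where "M = 8 * Wm * Kp * 2 powr d0 * \<beta>^2 * (2 + 8 / \<epsilon>)"
  show ?thesis
  proof (intro exI[of _ M] allI impI)
    fix Q X C :: real and a b :: "nat \<Rightarrow> complex"
    assume Q: "Q \<ge> 2" and X1: "1 \<le> X" and X2: "X \<le> Q^2" and C: "C \<ge> 1"
      and zero: "\<forall>n. real n > X \<longrightarrow> a n = 0 \<and> b n = 0"
      and hyp: "\<forall>\<delta> K c l u v q \<psi>. \<delta> > 0 \<longrightarrow> K > 0 \<longrightarrow> c \<ge> 1 \<longrightarrow> l \<ge> 1 \<longrightarrow>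
        real c \<le> K * X \<longrightarrow> real l \<le> K * X \<longrightarrow> u \<le> K * X \<longrightarrow> v \<le> K * X \<longrightarrow>
        dirichlet_char q \<psi> \<longrightarrow> real (conductor q \<psi>) \<le> K * Q \<longrightarrow>
          norm (\<Sum>m | 1 \<le> m \<and> real m \<le> u \<and> coprime m c. a (m * l) * \<psi> m)
            \<le> B \<delta> K * real l powr (-1/2) * Q powr \<delta>
        \<and> norm (\<Sum>n | 1 \<le> n \<and> real n \<le> v \<and> coprime n c. b (n * l) * \<psi> n)
            \<le> B \<delta> K * real l powr (-1/2) * Q powr \<delta>"
    show "norm (\<Sum>(m, n) | 1 \<le> m \<and> real m \<le> X \<and> 1 \<le> n \<and> real n \<le> X \<and> m \<noteq> n.
              a m * b n * complex_of_real (U_fun W Q C m n))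
       \<le> M * (Q / C) * Q powr \<epsilon>"
    proof -
    have Qpos: "Q > 0" using Q by simp
    have hs: "norm (\<Sum>m | 1 \<le> m \<and> real m \<le> u \<and> coprime m c. a (m * l) * \<psi> m)
            \<le> B d0 2 * real l powr (-1/2) * Q powr d0
        \<and> norm (\<Sum>n | 1 \<le> n \<and> real n \<le> v \<and> coprime n c. b (n * l) * \<psi> n)
            \<le> B d0 2 * real l powr (-1/2) * Q powr d0"
      if "c \<ge> 1" "l \<ge> 1" "real c \<le> 2 * X" "real l \<le> 2 * X" "u \<le> 2 * X" "v \<le> 2 * X"
         "dirichlet_char q \<psi>" "real (conductor q \<psi>) \<le> 2 * Q" for c l u v q \<psi>
      using hyp[rule_format, of d0 2 c l u v q \<psi>] d0 that by auto
    have cond1: "real (conductor 1 (\<lambda>_. 1)) \<le> 2 * Q"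
      using conductor_le[OF dch_one] Q by simp
    have set1: "{m::nat. 1 \<le> m \<and> real m \<le> 1 \<and> coprime m 1} = {1}" by auto
    have "norm (\<Sum>m | 1 \<le> m \<and> real m \<le> 1 \<and> coprime m 1. a (m * 1) * (\<lambda>_. 1) m)
            \<le> B d0 2 * real 1 powr (-1/2) * Q powr d0"
      using hs[of 1 1 1 1 1 "\<lambda>_. 1"] X1 dch_one cond1 by auto
    then have "0 \<le> B d0 2 * real 1 powr (-1/2) * Q powr d0" using norm_ge_zero order_trans by blast
    then have "0 \<le> B d0 2 * Q powr d0" by simp
    then have Bnn: "B d0 2 \<ge> 0" using Qpos by (simp add: zero_le_mult_iff)
    then have Bb: "B d0 2 = \<beta>" unfolding \<beta>_def by simp
    define Ms where "Ms = {m::nat. 1 \<le> m \<and> real m \<le> X}"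
    have Ms_eq': "Ms = {1..nat \<lfloor>X\<rfloor>}" unfolding Ms_def by (rule Ms_eq[OF X1])
    have finMs: "finite Ms" unfolding Ms_eq' by simp
    have pab: "norm (a n) \<le> \<beta> * real n powr (-1/2) * Q powr d0 \<and> norm (b n) \<le> \<beta> * real n powr (-1/2) * Q powr d0"
      if n: "n \<in> Ms" for n
    proof -
      have n1: "n \<ge> 1" "real n \<le> 2 * X" using n X1 unfolding Ms_def by auto
      have "norm (\<Sum>m | 1 \<le> m \<and> real m \<le> 1 \<and> coprime m 1. a (m * n) * (\<lambda>_. 1) m)
            \<le> B d0 2 * real n powr (-1/2) * Q powr d0
        \<and> norm (\<Sum>m | 1 \<le> m \<and> real m \<le> 1 \<and> coprime m 1. b (m * n) * (\<lambda>_. 1) m)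
            \<le> B d0 2 * real n powr (-1/2) * Q powr d0"
        using hs[of 1 n 1 1 1 "\<lambda>_. 1"] n1 X1 dch_one cond1 by auto
      then show ?thesis unfolding set1 Bb by simp
    qed
    have chsum: "norm (\<Sum>m\<in>Ms. a m * \<psi> m) \<le> \<beta> * Q powr d0 \<and> norm (\<Sum>n\<in>Ms. b n * \<psi> n) \<le> \<beta> * Q powr d0"
      if q: "q \<ge> 1" "real q \<le> 2 * Q" "dirichlet_char q \<psi>" for q \<psi>
    proof -
      have cq: "real (conductor q \<psi>) \<le> 2 * Q" using conductor_le[OF q(3)] q(2) by linarith
      have setX: "{m::nat. 1 \<le> m \<and> real m \<le> X \<and> coprime m 1} = Ms" unfolding Ms_def by auto
      have "norm (\<Sum>m | 1 \<le> m \<and> real m \<le> X \<and> coprime m 1. a (m * 1) * \<psi> m)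
            \<le> B d0 2 * real 1 powr (-1/2) * Q powr d0
        \<and> norm (\<Sum>n | 1 \<le> n \<and> real n \<le> X \<and> coprime n 1. b (n * 1) * \<psi> n)
            \<le> B d0 2 * real 1 powr (-1/2) * Q powr d0"
        using hs[of 1 1 X X q \<psi>] X1 q(3) cq by auto
      then show ?thesis unfolding setX Bb by simp
    qed
    define R where "R = \<beta> * Q powr d0"
    have R0: "R \<ge> 0" unfolding R_def \<beta>_def by simp
    have harmX: "(\<Sum>m\<in>Ms. 1 / real m) \<le> 1 + 2 * ln Q"
    proof -
      have nX: "nat \<lfloor>X\<rfloor> \<ge> 1" using X1 by linarith
      have "(\<Sum>m\<in>Ms. 1 / real m) \<le> 1 + ln (real (nat \<lfloor>X\<rfloor>))" unfolding Ms_eq' by (rule harm_bound[OF nX])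
      also have "ln (real (nat \<lfloor>X\<rfloor>)) \<le> ln X" using nX X1 by (subst ln_le_cancel_iff) auto
      also have "ln X \<le> ln (Q^2)" using X1 X2 by (subst ln_le_cancel_iff) auto
      also have "ln (Q^2) = 2 * ln Q" using Qpos by (simp add: ln_realpow)
      finally show ?thesis by simp
    qed
    have diag: "norm (\<Sum>m\<in>Ms. a m * b m * (if P m then 1 else 0)) \<le> R^2 * (1 + 2 * ln Q)" for P
    proof -
      have "norm (\<Sum>m\<in>Ms. a m * b m * (if P m then 1 else 0)) \<le> (\<Sum>m\<in>Ms. norm (a m * b m * (if P m then 1 else 0)))"
        by (rule norm_sum)
      also have "\<dots> \<le> (\<Sum>m\<in>Ms. R^2 * (1 / real m))"
      proof (rule sum_mono)
        fix m assume m: "m \<in> Ms"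
        have m1: "real m \<ge> 1" using m unfolding Ms_def by simp
        have pw: "real m powr (-1/2) * real m powr (-1/2) = 1 / real m"
          using m1 by (simp add: powr_add[symmetric] powr_minus_divide)
        have "norm (a m * b m * (if P m then 1 else 0)) \<le> norm (a m) * norm (b m)"
          by (simp add: norm_mult)
        also have "\<dots> \<le> (\<beta> * real m powr (-1/2) * Q powr d0) * (\<beta> * real m powr (-1/2) * Q powr d0)"
          using pab[OF m] by (intro mult_mono) (auto simp: \<beta>_def)
        also have "\<dots> = R^2 * (real m powr (-1/2) * real m powr (-1/2))"
          unfolding R_def by (simp add: power2_eq_square mult_ac)
        finally show "norm (a m * b m * (if P m then 1 else 0)) \<le> R^2 * (1 / real m)" unfolding pw .
      qed
      also have "\<dots> = R^2 * (\<Sum>m\<in>Ms. 1 / real m)" by (simp add: sum_distrib_left)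
      also have "\<dots> \<le> R^2 * (1 + 2 * ln Q)" using harmX by (intro mult_left_mono) auto
      finally show ?thesis .
    qed
    define N where "N = nat \<lceil>2*Q\<rceil>"
    define Bx where "Bx = {1..N}\<times>{1..N}\<times>{1..N}"
    have finB: "finite Bx" unfolding Bx_def by simp
    define It where "It t m n = (case t of (x, y, z) \<Rightarrow> coprime (x*y*z) (m*n) \<and> int (x*z) dvd (int m - int n))"
      for t :: "nat \<times> nat \<times> nat" and m n :: nat
    define cw where "cw t = (case t of (x, y, z) \<Rightarrow> if C < real y then Uw W Q t else 0)" for t :: "nat \<times> nat \<times> nat"
    define P' where "P' = {p\<in>Ms\<times>Ms. fst p \<noteq> snd p}"
    have finP: "finite P'" unfolding P'_def using finMs by simp
    define E where "E t = (\<Sum>p\<in>P'. a (fst p) * b (snd p) * (if It t (fst p) (snd p) then 1 else 0))"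
      for t :: "nat \<times> nat \<times> nat"
    have setP: "{(m, n). 1 \<le> m \<and> real m \<le> X \<and> 1 \<le> n \<and> real n \<le> X \<and> m \<noteq> n} = P'"
      unfolding P'_def Ms_def by auto
    have term_eq: "a m * b n * complex_of_real (if t \<in> Us C m n then Uw W Q t else 0)
        = complex_of_real (cw t) * (a m * b n * (if It t m n then 1 else 0))" if t: "t \<in> Bx" for t m n
    proof -
      obtain x y z where txyz: "t = (x, y, z)" by (cases t) auto
      have ge: "x \<ge> 1" "y \<ge> 1" "z \<ge> 1" using t unfolding txyz Bx_def by auto
      have "t \<in> Us C m n \<longleftrightarrow> C < real y \<and> It t m n" unfolding txyz Us_def It_def using ge by auto
      then show ?thesis unfolding cw_def txyz by auto
    qed
    have UE_eq: "(\<Sum>(m, n) | 1 \<le> m \<and> real m \<le> X \<and> 1 \<le> n \<and> real n \<le> X \<and> m \<noteq> n.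
              a m * b n * complex_of_real (U_fun W Q C m n)) = (\<Sum>t\<in>Bx. complex_of_real (cw t) * E t)"
    proof -
      have "(\<Sum>(m, n) | 1 \<le> m \<and> real m \<le> X \<and> 1 \<le> n \<and> real n \<le> X \<and> m \<noteq> n.
              a m * b n * complex_of_real (U_fun W Q C m n))
          = (\<Sum>p\<in>P'. a (fst p) * b (snd p) * complex_of_real (U_fun W Q C (fst p) (snd p)))"
        unfolding setP by (simp add: case_prod_beta)
      also have "\<dots> = (\<Sum>p\<in>P'. \<Sum>t\<in>Bx. complex_of_real (cw t) * (a (fst p) * b (snd p) * (if It t (fst p) (snd p) then 1 else 0)))"
      proof (rule sum.cong[OF refl])
        fix p assume "p \<in> P'"
        have "a (fst p) * b (snd p) * complex_of_real (U_fun W Q C (fst p) (snd p))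
          = a (fst p) * b (snd p) * complex_of_real (\<Sum>t\<in>Bx. if t \<in> Us C (fst p) (snd p) then Uw W Q t else 0)"
          unfolding U_box[OF assms(2) Qpos] Bx_def N_def ..
        also have "\<dots> = (\<Sum>t\<in>Bx. a (fst p) * b (snd p) * complex_of_real (if t \<in> Us C (fst p) (snd p) then Uw W Q t else 0))"
          by (simp add: sum_distrib_left)
        also have "\<dots> = (\<Sum>t\<in>Bx. complex_of_real (cw t) * (a (fst p) * b (snd p) * (if It t (fst p) (snd p) then 1 else 0)))"
          by (rule sum.cong[OF refl]) (rule term_eq)
        finally show "a (fst p) * b (snd p) * complex_of_real (U_fun W Q C (fst p) (snd p)) =
          (\<Sum>t\<in>Bx. complex_of_real (cw t) * (a (fst p) * b (snd p) * (if It t (fst p) (snd p) then 1 else 0)))" .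
      qed
      also have "\<dots> = (\<Sum>t\<in>Bx. \<Sum>p\<in>P'. complex_of_real (cw t) * (a (fst p) * b (snd p) * (if It t (fst p) (snd p) then 1 else 0)))"
        by (rule sum.swap)
      also have "\<dots> = (\<Sum>t\<in>Bx. complex_of_real (cw t) * E t)"
        unfolding E_def by (simp add: sum_distrib_left)
      finally show ?thesis .
    qed
    have lnQ: "ln Q \<ge> 0" using Q by simp
    have Ebound: "norm (E t) \<le> R^2 * (2 + 2 * ln Q)"
      if t: "t = (x, y, z)" "x \<ge> 1" "y \<ge> 1" "z \<ge> 1" "real (x^2*y*z) \<le> 2*Q" for t x y z
    proof -
      have q2Q: "real (x*y*z) \<le> 2*Q" using big_prod(4)[OF t(2,3,4)] t(5)
        by (meson of_nat_le_iff order_trans)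
      define f where "f p = a (fst p) * b (snd p) * (if It t (fst p) (snd p) then 1 else 0)" for p
      have "E t = (\<Sum>p\<in>Ms\<times>Ms. f p) - (\<Sum>m\<in>Ms. f (m, m))"
        unfolding E_def P'_def f_def by (rule split_offdiag[OF finMs])
      moreover have "(\<Sum>p\<in>Ms\<times>Ms. f p) = (\<Sum>(m,n)\<in>Ms\<times>Ms. a m * b n *
          (if coprime (x*y*z) (m*n) \<and> int (x*z) dvd (int m - int n) then 1 else 0))"
        unfolding f_def It_def t(1) by (simp add: case_prod_beta)
      moreover have "norm (\<Sum>(m,n)\<in>Ms\<times>Ms. a m * b n *
          (if coprime (x*y*z) (m*n) \<and> int (x*z) dvd (int m - int n) then 1 else 0)) \<le> R^2"
        by (rule full_bound[OF finMs t(2,3,4) q2Q]) (use chsum in \<open>auto simp: R_def\<close>)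
      ultimately have A: "E t = (\<Sum>p\<in>Ms\<times>Ms. f p) - (\<Sum>m\<in>Ms. f (m, m))" "norm (\<Sum>p\<in>Ms\<times>Ms. f p) \<le> R^2"
        by auto
      have D: "norm (\<Sum>m\<in>Ms. f (m, m)) \<le> R^2 * (1 + 2 * ln Q)"
        unfolding f_def using diag by simp
      have "norm (E t) \<le> norm (\<Sum>p\<in>Ms\<times>Ms. f p) + norm (\<Sum>m\<in>Ms. f (m, m))"
        unfolding A(1) by (rule norm_triangle_ineq4)
      also have "\<dots> \<le> R^2 + R^2 * (1 + 2 * ln Q)" using A(2) D by (rule add_mono)
      finally have "norm (E t) \<le> R^2 + R^2 * (1 + 2 * ln Q)" .
      then show ?thesis by (simp add: algebra_simps)
    qed
    define g where "g t = (case t of (x, y, z) \<Rightarrow> if C < real y \<and> real (x^2*y*z) \<le> 2*Q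
            then Wm / (real x * real (totient (x*y))) else 0)" for t :: "nat \<times> nat \<times> nat"
    have tb: "norm (complex_of_real (cw t) * E t) \<le> g t * (R^2 * (2 + 2 * ln Q))" if t: "t \<in> Bx" for t
    proof -
      obtain x y z where txyz: "t = (x, y, z)" by (cases t) auto
      have ge: "x \<ge> 1" "y \<ge> 1" "z \<ge> 1" using t unfolding txyz Bx_def by auto
      show ?thesis
      proof (cases "C < real y \<and> real (x^2*y*z) \<le> 2*Q")
        case True
        have "\<bar>Uw W Q t\<bar> = \<bar>W (real (x^2*y*z) / Q)\<bar> * \<bar>real_of_int (moebius_mu x)\<bar> *
            \<bar>real_of_int (moebius_mu (x*y))\<bar> / (real x * real (totient (x*y)))"
          unfolding txyz Uw_def by (simp add: abs_mult)
        also have "\<dots> \<le> Wm * 1 * 1 / (real x * real (totient (x*y)))"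
          using Wm mu_abs ge by (intro divide_right_mono mult_mono) auto
        finally have cwb: "\<bar>cw t\<bar> \<le> g t" using True unfolding cw_def g_def txyz by simp
        have "norm (complex_of_real (cw t) * E t) = \<bar>cw t\<bar> * norm (E t)" by (simp add: norm_mult)
        also have "\<dots> \<le> g t * (R^2 * (2 + 2 * ln Q))"
          using cwb Ebound[OF txyz ge] True by (intro mult_mono) auto
        finally show ?thesis .
      next
        case False
        have "cw t = 0"
        proof (cases "C < real y")
          case True
          with False have "real (x^2*y*z) > 2*Q" by simp
          then have "real (x^2*y*z) / Q > 2" using Qpos by (simp add: field_simps)
          then have "W (real (x^2*y*z) / Q) = 0" using assms(2) by auto
          then show ?thesis unfolding cw_def txyz Uw_def by simp
        qed (simp add: cw_def txyz)
        moreover have "g t = 0" unfolding g_def txyz using False by (simp only: prod.case if_False)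
        ultimately show ?thesis by simp
      qed
    qed
    have "norm (\<Sum>(m, n) | 1 \<le> m \<and> real m \<le> X \<and> 1 \<le> n \<and> real n \<le> X \<and> m \<noteq> n.
              a m * b n * complex_of_real (U_fun W Q C m n))
       \<le> (\<Sum>t\<in>Bx. g t * (R^2 * (2 + 2 * ln Q)))"
      unfolding UE_eq by (rule order_trans[OF norm_sum sum_mono]) (rule tb)
    also have "\<dots> = (\<Sum>t\<in>Bx. g t) * (R^2 * (2 + 2 * ln Q))" by (simp add: sum_distrib_right)
    also have "(\<Sum>t\<in>Bx. g t) \<le> 8 * Wm * Kp * 2 powr d0 * Q powr (1+d0) / C"
      unfolding g_def Bx_def using weight_sum[OF Q C Wm(1) Kp(1) d0 Kp(2)] by simp
    then have "(\<Sum>t\<in>Bx. g t) * (R^2 * (2 + 2 * ln Q)) \<le> 8 * Wm * Kp * 2 powr d0 * Q powr (1+d0) / C * (R^2 * (2 + 2 * ln Q))"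
      using lnQ by (intro mult_right_mono) auto
    also have "\<dots> \<le> 8 * Wm * Kp * 2 powr d0 * Q powr (1+d0) / C * ((\<beta>^2 * Q powr (2*d0)) * ((2 + 8 / \<epsilon>) * Q powr d0))"
    proof -
      have "(Q powr d0)^2 = Q powr d0 * Q powr d0" by (simp add: power2_eq_square)
      also have "\<dots> = Q powr (d0 + d0)" by (simp only: powr_add)
      also have "d0 + d0 = 2 * d0" by simp
      finally have qq: "(Q powr d0)^2 = Q powr (2*d0)" .
      have R2: "R^2 = \<beta>^2 * Q powr (2*d0)" unfolding R_def qq[symmetric] by (simp only: power_mult_distrib)
      have "ln Q \<le> Q powr d0 / d0" using Q d0 by (intro ln_le_powr) auto
      also have "Q powr d0 / d0 = (4 / \<epsilon>) * Q powr d0" unfolding d0_def by simp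
      finally have l: "ln Q \<le> (4 / \<epsilon>) * Q powr d0" .
      have "1 \<le> Q powr d0" using Q d0 by (intro ge_one_powr_ge_zero) auto
      then have "2 + 2 * ln Q \<le> 2 * Q powr d0 + 2 * ((4 / \<epsilon>) * Q powr d0)" using l by linarith
      also have "\<dots> = (2 + 8 / \<epsilon>) * Q powr d0" by (simp add: algebra_simps)
      finally have "2 + 2 * ln Q \<le> (2 + 8 / \<epsilon>) * Q powr d0" .
      moreover have "0 \<le> 8 * Wm * Kp * 2 powr d0 * Q powr (1+d0) / C" using Wm Kp C by simp
      ultimately show ?thesis unfolding R2 using lnQ by (intro mult_left_mono) auto
    qed
    also have "\<dots> = M * (Q / C) * Q powr \<epsilon>"
    proof -
      have "Q powr (1+d0) * Q powr (2*d0) * Q powr d0 = Q powr (1 + d0 + 2*d0 + d0)"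
        by (simp only: powr_add[symmetric])
      also have "1 + d0 + 2*d0 + d0 = 1 + \<epsilon>" unfolding d0_def by simp
      also have "Q powr (1 + \<epsilon>) = Q * Q powr \<epsilon>" using Qpos by (simp add: powr_add)
      finally have pq: "Q powr (1+d0) * Q powr (2*d0) * Q powr d0 = Q * Q powr \<epsilon>" .
      have "8 * Wm * Kp * 2 powr d0 * Q powr (1+d0) / C * ((\<beta>^2 * Q powr (2*d0)) * ((2 + 8 / \<epsilon>) * Q powr d0))
          = M / C * (Q powr (1+d0) * Q powr (2*d0) * Q powr d0)"
        unfolding M_def by (simp add: divide_inverse mult_ac)
      also have "\<dots> = M * (Q / C) * Q powr \<epsilon>" unfolding pq by (simp add: divide_inverse mult_ac)
      finally show ?thesis .
    qed
    finally show ?thesis .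
    qed
  qed
qed


end
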